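(* Let $n \equiv 1 \pmod 6$ be a prime and let $\alpha$ be a primitive element of $\mathbb{F}_{2^n}$ (identified with $\mathbb{F}_2^n$). If there exist $\frac{2^n-2}{42n}$ pairwise disjoint coset complete $3$-dimensional subspaces of $\mathbb{F}_2^n$, then there exists a Steiner structure $\mathbb{S}_2[2,3,n]$.
   Context: For $s \in \mathbb{Z}_{2^n-1}$, the cyclotomic coset of $s$ is $C_s = \{ s\cdot 2^i \bmod (2^n-1) : 0\le i\le n-1\}$ and $C(s)$ denotes its smallest element (the coset representative). For a $3$-dimensional $\mathbb{F}_2$-subspace $X = \{0,\alpha^{i_1},\ldots,\alpha^{i_7}\}$ with $i_1,\ldots,i_7 \in\{0,\ldots,2^n-2\}$ distinct, its coset difference set is $C(\Delta(X)) = \{ C(i_r - i_s \bmod (2^n-1)) : 1\le r,s\le 7,\ r\ne s\}$. $X$ is coset complete if $|C(\Delta(X))| = 42$; two coset complete subspaces $X,Y$ are disjoint coset complete if $C(\Delta(X))\cap C(\Delta(Y)) = \varnothing$. A Steiner structure $\mathbb{S}_q[t,k,n]$ is a set $\mathbb{S}$ of $k$-dimensional subspaces of $\mathbb{F}_q^n$ such that every $t$-dimensional subspace of $\mathbb{F}_q^n$ is contained in exactly one element of $\mathbb{S}$. *)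

theory Defs
  imports "HOL-Computational_Algebra.Primes"
begin

text \<open>F_2-subspaces of a field of characteristic 2 (the field F_{2^n}, identified with F_2^n):
  an F_2-subspace is a set containing 0 and closed under addition; an F_2-subspace
  has dimension k iff it has exactly 2^k elements.\<close>
definition f2_subspace :: "'a::field set \<Rightarrow> bool" where
  "f2_subspace V \<longleftrightarrow> 0 \<in> V \<and> (\<forall>x\<in>V. \<forall>y\<in>V. x + y \<in> V)"

definition f2_dim_subspace :: "nat \<Rightarrow> 'a::field set \<Rightarrow> bool" where
  "f2_dim_subspace k V \<longleftrightarrow> f2_subspace V \<and> finite V \<and> card V = 2 ^ k"

definition primitive_elem :: "'a::field \<Rightarrow> bool" where
  "primitive_elem \<alpha> \<longleftrightarrow> (\<forall>x. x \<noteq> 0 \<longrightarrow> (\<exists>i::nat. x = \<alpha> ^ i))"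

definition cyc_coset :: "nat \<Rightarrow> nat \<Rightarrow> nat set" where
  "cyc_coset n s = {(s * 2 ^ i) mod (2 ^ n - 1) | i. i \<le> n - 1}"

definition coset_rep :: "nat \<Rightarrow> nat \<Rightarrow> nat" where
  "coset_rep n s = Min (cyc_coset n s)"

definition exps :: "'a::field \<Rightarrow> nat \<Rightarrow> 'a set \<Rightarrow> nat set" where
  "exps \<alpha> n X = {i. i \<le> 2 ^ n - 2 \<and> \<alpha> ^ i \<in> X}"

definition coset_diff_set :: "'a::field \<Rightarrow> nat \<Rightarrow> 'a set \<Rightarrow> nat set" where
  "coset_diff_set \<alpha> n X =
     {coset_rep n (nat ((int r - int s) mod (2 ^ n - 1))) | r s.
        r \<in> exps \<alpha> n X \<and> s \<in> exps \<alpha> n X \<and> r \<noteq> s}"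

definition coset_complete :: "'a::field \<Rightarrow> nat \<Rightarrow> 'a set \<Rightarrow> bool" where
  "coset_complete \<alpha> n X \<longleftrightarrow> card (coset_diff_set \<alpha> n X) = 42"

definition disjoint_coset_complete :: "'a::field \<Rightarrow> nat \<Rightarrow> 'a set \<Rightarrow> 'a set \<Rightarrow> bool" where
  "disjoint_coset_complete \<alpha> n X Y \<longleftrightarrow>
     coset_complete \<alpha> n X \<and> coset_complete \<alpha> n Y \<and>
     coset_diff_set \<alpha> n X \<inter> coset_diff_set \<alpha> n Y = {}"

text \<open>Steiner structure S_2[t,k,n] in the ambient space (the whole field 'a, of order 2^n).\<close>
definition steiner_structure :: "nat \<Rightarrow> nat \<Rightarrow> 'a::field set set \<Rightarrow> bool" where
  "steiner_structure t k S \<longleftrightarrow>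
     (\<forall>X\<in>S. f2_dim_subspace k X) \<and>
     (\<forall>T. f2_dim_subspace t T \<longrightarrow> (\<exists>!X. X \<in> S \<and> T \<subseteq> X))"

end

theory Submission
  imports Defs
begin



lemma gcd_pow2_minus1:
  "gcd ((2::nat)^a - 1) (2^b - 1) = 2^(gcd a b) - 1"
proof (induction "a+b" arbitrary: a b rule: less_induct)
  case less
  show ?case
  proof (cases "a = 0 \<or> b = 0")
    case True then show ?thesis by auto
  next
    case False
    show ?thesis
    proof (cases "b \<le> a")
      case True
      have e: "(2::nat)^a - 1 = 2^(a-b) * (2^b - 1) + (2^(a-b) - 1)"
      proof -
        have "(2::nat)^a = 2^(a-b) * 2^b" using True by (simp add: power_add[symmetric])
        moreover have "(1::nat) \<le> 2^(a-b)" "(1::nat) \<le> 2^b" by simp_all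
        ultimately show ?thesis by (simp add: diff_mult_distrib2 algebra_simps)
      qed
      have "gcd ((2::nat)^a - 1) (2^b - 1) = gcd (2^(a-b) - 1) (2^b - 1)"
        unfolding e by (metis gcd.commute gcd_add_mult)
      also have "\<dots> = 2^(gcd (a-b) b) - 1" using less False True by auto
      also have "gcd (a-b) b = gcd a b" using True by (metis gcd_diff1_nat)
      finally show ?thesis .
    next
      case nb: False
      have "gcd ((2::nat)^b - 1) (2^a - 1) = 2^(gcd b a) - 1"
      proof -
        have e: "(2::nat)^b - 1 = 2^(b-a) * (2^a - 1) + (2^(b-a) - 1)"
        proof -
          have "(2::nat)^b = 2^(b-a) * 2^a" using nb by (simp add: power_add[symmetric])
          moreover have "(1::nat) \<le> 2^(b-a)" "(1::nat) \<le> 2^a" by simp_all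
          ultimately show ?thesis by (simp add: diff_mult_distrib2 algebra_simps)
        qed
        have "gcd ((2::nat)^b - 1) (2^a - 1) = gcd (2^(b-a) - 1) (2^a - 1)"
          unfolding e by (metis gcd.commute gcd_add_mult)
        also have "\<dots> = 2^(gcd (b-a) a) - 1" using less False nb by auto
        also have "gcd (b-a) a = gcd b a" using nb by (metis gcd_diff1_nat nat_le_linear)
        finally show ?thesis .
      qed
      then show ?thesis by (simp add: gcd.commute)
    qed
  qed
qed


lemma pow2_mod_reduce:
  assumes "n \<ge> 1"
  shows "(t * 2^x) mod (2^n - 1) = (t * 2^(x mod n)) mod ((2::nat)^n - 1)"
proof -
  let ?N = "(2::nat)^n - 1"
  have A: "(2::nat)^n mod ?N = 1 mod ?N"
  proof -
    have e: "(2::nat)^n = ?N + 1" by simp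
    have "(?N + 1) mod ?N = 1 mod ?N" by (rule mod_add_self1)
    then show ?thesis using e by argo
  qed
  have B: "((2::nat)^n)^(x div n) mod ?N = 1 mod ?N"
  proof -
    have "((2::nat)^n)^(x div n) mod ?N = ((2^n) mod ?N)^(x div n) mod ?N" by (rule power_mod[symmetric])
    also have "\<dots> = (1 mod ?N)^(x div n) mod ?N" unfolding A by (rule refl)
    also have "\<dots> = 1^(x div n) mod ?N" by (rule power_mod)
    finally show ?thesis by simp
  qed
  have C: "(2::nat)^x = (2^n)^(x div n) * 2^(x mod n)"
  proof -
    have "(2::nat)^(n*(x div n) + x mod n) = (2^n)^(x div n) * 2^(x mod n)"
      by (simp only: power_add power_mult)
    then show ?thesis by (simp only: mult_div_mod_eq)
  qed
  have "(t * 2^x) mod ?N = (t * 2^(x mod n) * ((2^n)^(x div n))) mod ?N"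
    by (subst C) (simp only: ac_simps)
  also have "\<dots> = (t * 2^(x mod n) * ((2^n)^(x div n) mod ?N)) mod ?N"
    by (rule mod_mult_right_eq[symmetric])
  also have "\<dots> = (t * 2^(x mod n) * (1 mod ?N)) mod ?N" using B by simp
  also have "\<dots> = (t * 2^(x mod n)) mod ?N" by (metis mod_mult_right_eq mult.right_neutral)
  finally show ?thesis .
qed

lemma in_cyc_coset:
  assumes "n \<ge> 1"
  shows "x \<in> cyc_coset n t \<longleftrightarrow> (\<exists>i. x = (t * 2^i) mod (2^n - 1))"
proof
  assume "x \<in> cyc_coset n t" then show "\<exists>i. x = (t * 2^i) mod (2^n - 1)"
    unfolding cyc_coset_def by auto
next
  assume "\<exists>i. x = (t * 2^i) mod (2^n - 1)"
  then obtain i where "x = (t * 2^i) mod (2^n - 1)" by blast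
  then have "x = (t * 2^(i mod n)) mod (2^n - 1)" using pow2_mod_reduce[OF assms, of t i] by simp
  moreover have "i mod n < n" using assms by simp
  then have "i mod n \<le> n - 1" by linarith
  ultimately show "x \<in> cyc_coset n t" unfolding cyc_coset_def by blast
qed

lemma cyc_coset_meet:
  assumes "n \<ge> 1" and "(t1 * 2^k1) mod (2^n - 1) = (t2 * 2^k2) mod ((2::nat)^n - 1)"
  shows "cyc_coset n t1 = cyc_coset n t2"
proof -
  let ?N = "(2::nat)^n - 1"
  have sub: "cyc_coset n a \<subseteq> cyc_coset n b"
    if h: "(a * 2^ka) mod ?N = (b * 2^kb) mod ?N" for a b ka kb
  proof
    fix x assume "x \<in> cyc_coset n a"
    then obtain i where x: "x = (a * 2^i) mod ?N" using in_cyc_coset[OF assms(1)] by blast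
    have "(a * 2^i) mod ?N = (a * 2^(i + n*ka)) mod ?N"
      using pow2_mod_reduce[OF assms(1), of a "i + n*ka"] pow2_mod_reduce[OF assms(1), of a i] by simp
    also have "i + n*ka = ka + (i + (n-1)*ka)"
    proof -
      obtain m where "n = Suc m" using assms(1) by (cases n) auto
      then show ?thesis by simp
    qed
    also have "(a * 2^(ka + (i + (n-1)*ka))) mod ?N = ((a * 2^ka) mod ?N * 2^(i + (n-1)*ka)) mod ?N"
      by (simp add: power_add mod_mult_left_eq mult.assoc)
    also have "\<dots> = ((b * 2^kb) mod ?N * 2^(i + (n-1)*ka)) mod ?N" using h by simp
    also have "\<dots> = (b * 2^(kb + (i + (n-1)*ka))) mod ?N"
      by (simp add: power_add mod_mult_left_eq mult.assoc)
    finally show "x \<in> cyc_coset n b" using x in_cyc_coset[OF assms(1)] by blast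
  qed
  show ?thesis using sub[OF assms(2)] sub[OF assms(2)[symmetric]] by blast
qed

lemma cyc_coset_finite: "finite (cyc_coset n t)"
  unfolding cyc_coset_def by simp

lemma cyc_coset_nonempty: "(t mod (2^n-1)) \<in> cyc_coset n t"
  unfolding cyc_coset_def by (rule CollectI, rule exI[of _ 0]) simp

lemma coset_rep_in: "coset_rep n t \<in> cyc_coset n t"
  unfolding coset_rep_def using cyc_coset_finite cyc_coset_nonempty
  by (metis Min_in empty_iff)

lemma coset_rep_coset:
  assumes "n \<ge> 1" shows "cyc_coset n (coset_rep n t) = cyc_coset n t"
proof -
  obtain i where i: "coset_rep n t = (t * 2^i) mod (2^n-1)"
    using coset_rep_in in_cyc_coset[OF assms] by blast
  show ?thesis
    by (rule cyc_coset_meet[OF assms, of _ 0 _ i]) (simp add: i)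
qed

lemma coset_rep_rep:
  assumes "n \<ge> 1" shows "coset_rep n (coset_rep n t) = coset_rep n t"
  using coset_rep_coset[OF assms] unfolding coset_rep_def by simp


lemma coprime_N_pow2:
  assumes "n \<ge> 1" shows "coprime ((2::nat)^n - 1) (2^i)"
proof -
  have "odd ((2::nat)^n - 1)" using assms by (simp add: Suc_le_eq)
  then have "coprime ((2::nat)^n - 1) 2" by (metis coprime_commute coprime_left_2_iff_odd)
  then show ?thesis by (simp add: coprime_power_right_iff)
qed

lemma coset_elem_nz:
  assumes "n \<ge> 1" and "t mod (2^n - 1) \<noteq> 0"
  shows "(t * 2^i) mod ((2::nat)^n - 1) \<noteq> 0"
proof
  assume "(t * 2^i) mod ((2::nat)^n - 1) = 0"
  then have "(2^n - 1) dvd t * 2^i" by (simp add: mod_eq_0_iff_dvd)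
  then have "(2^n - 1) dvd t" using coprime_N_pow2[OF assms(1), of i]
    using coprime_dvd_mult_left_iff by blast
  then show False using assms(2) by (simp add: mod_eq_0_iff_dvd)
qed

lemma coset_inj_aux:
  assumes "prime n" and "t mod (2^n - 1) \<noteq> 0" and "k1 < k2" and "k2 < n"
    and "(t * 2^k1) mod ((2::nat)^n - 1) = (t * 2^k2) mod (2^n - 1)"
  shows False
proof -
  let ?N = "(2::nat)^n - 1"
  have n1: "n \<ge> 1" using assms(1) prime_ge_1_nat by blast
  define m where "m = k2 - k1"
  have m: "0 < m" "m < n" using assms(3,4) by (auto simp: m_def)
  have k2: "t * 2^k2 = t * 2^k1 * 2^m" using assms(3) by (simp add: m_def power_add[symmetric])
  have le: "t * 2^k1 \<le> t * 2^k1 * 2^m" by simp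
  have "?N dvd t * 2^k1 * 2^m - t * 2^k1"
    using mod_eq_dvd_iff_nat[OF le, of ?N] assms(5)[unfolded k2] by argo
  also have "t * 2^k1 * 2^m - t * 2^k1 = t * 2^k1 * (2^m - 1)" by (simp add: diff_mult_distrib2)
  finally have d: "?N dvd (t * (2^m - 1)) * 2^k1" by (simp add: ac_simps)
  have "?N dvd t * (2^m - 1)" using d coprime_N_pow2[OF n1, of k1]
    using coprime_dvd_mult_left_iff by blast
  moreover have "coprime ?N (2^m - 1)"
  proof -
    have "\<not> n dvd m" using m by (auto dest: dvd_imp_le)
    then have "coprime n m" using assms(1) by (simp add: prime_imp_coprime)
    then have "gcd m n = 1" by (simp add: coprime_iff_gcd_eq_1 gcd.commute)
    then have "gcd ((2::nat)^m - 1) (2^n - 1) = 1" using gcd_pow2_minus1[of m n] by simp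
    then show ?thesis by (simp add: coprime_iff_gcd_eq_1 gcd.commute)
  qed
  ultimately have "?N dvd t" using coprime_dvd_mult_left_iff by blast
  then show False using assms(2) by (simp add: mod_eq_0_iff_dvd)
qed

lemma coset_inj:
  assumes "prime n" and "t mod (2^n - 1) \<noteq> 0" and "k1 < n" and "k2 < n"
    and "(t * 2^k1) mod ((2::nat)^n - 1) = (t * 2^k2) mod (2^n - 1)"
  shows "k1 = k2"
  using coset_inj_aux[OF assms(1,2) _ assms(4) assms(5)] coset_inj_aux[OF assms(1,2) _ assms(3) assms(5)[symmetric]]
  by (meson linorder_neqE_nat)

lemma cyc_coset_card:
  assumes "prime n" and "t mod (2^n - 1) \<noteq> 0"
  shows "card (cyc_coset n t) = n"
proof -
  have n1: "n \<ge> 1" using assms(1) prime_ge_1_nat by blast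
  have e: "cyc_coset n t = (\<lambda>i. (t * 2^i) mod (2^n - 1)) ` {..<n}"
    unfolding cyc_coset_def using n1 by (auto simp: image_def)
  have "inj_on (\<lambda>i. (t * 2^i) mod (2^n - 1)) {..<n}"
    by (rule inj_onI) (use coset_inj[OF assms] in auto)
  then show ?thesis unfolding e by (simp add: card_image)
qed

lemma cyc_coset_range:
  assumes "n \<ge> 1" and "t mod (2^n - 1) \<noteq> 0" and "x \<in> cyc_coset n t"
  shows "x \<noteq> 0 \<and> x < 2^n - 1"
proof -
  obtain i where "x = (t * 2^i) mod (2^n - 1)" using assms(3) in_cyc_coset[OF assms(1)] by blast
  moreover have "(1::nat) < 2^n" using assms(1) by (intro one_less_power) auto
  then have "(0::nat) < 2^n - 1" by linarith
  ultimately show ?thesis using coset_elem_nz[OF assms(1,2), of i] by simp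
qed




lemma char2_field:
  assumes "card (UNIV :: 'a::{field,finite} set) = 2^n" and "n \<ge> 1"
  shows "(1::'a) + 1 = 0"
proof -
  have b: "bij_betw (\<lambda>x::'a. x + 1) UNIV UNIV"
    by (rule bij_betw_byWitness[where f'="\<lambda>x. x - 1"]) auto
  have "(\<Sum>x\<in>(UNIV::'a set). x + 1) = (\<Sum>x\<in>UNIV. x)"
    using sum.reindex_bij_betw[OF b, of "\<lambda>x. x"] by simp
  moreover have "(\<Sum>x\<in>(UNIV::'a set). x + 1) = (\<Sum>x\<in>UNIV. x) + of_nat (card (UNIV::'a set))"
    by (simp add: sum.distrib)
  ultimately have "of_nat (card (UNIV::'a set)) = (0::'a)" by simp
  then have "(2::'a)^n = 0" using assms(1) by simp
  then have "(2::'a) = 0" by simp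
  then show ?thesis by simp
qed

lemma field_pow_card:
  assumes "(x::'a::{field,finite}) \<noteq> 0"
  shows "x ^ (card (UNIV::'a set) - 1) = 1"
proof -
  let ?U = "UNIV - {0::'a}"
  have b: "bij_betw (\<lambda>y. x * y) ?U ?U"
    by (rule bij_betw_byWitness[where f'="\<lambda>y. y / x"]) (use assms in auto)
  have "(\<Prod>y\<in>?U. x * y) = (\<Prod>y\<in>?U. y)"
    using prod.reindex_bij_betw[OF b, of "\<lambda>y. y"] by simp
  moreover have "(\<Prod>y\<in>?U. x * y) = x ^ card ?U * (\<Prod>y\<in>?U. y)"
    by (simp add: prod.distrib)
  moreover have "(\<Prod>y\<in>?U. y) \<noteq> 0" by simp
  ultimately have "x ^ card ?U = 1" by simp
  moreover have "card ?U = card (UNIV::'a set) - 1" by (simp add: card_Diff_singleton)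
  ultimately show ?thesis by simp
qed

lemma frob_add:
  assumes "(1::'a::field) + 1 = 0"
  shows "((x::'a) + y) ^ (2^k) = x ^ (2^k) + y ^ (2^k)"
proof (induction k)
  case 0 then show ?case by simp
next
  case (Suc k)
  have sq: "(a + b)^2 = a^2 + b^2" for a b :: 'a
  proof -
    have "(a + b)^2 = a^2 + b^2 + (1 + 1) * (a * b)" by (simp add: power2_eq_square algebra_simps)
    then show ?thesis using assms by simp
  qed
  have "(x + y) ^ (2^Suc k) = ((x + y)^(2^k))^2" by (simp add: power_mult[symmetric] mult.commute)
  also have "\<dots> = (x^(2^k))^2 + (y^(2^k))^2" using Suc sq by simp
  also have "\<dots> = x ^ (2^Suc k) + y ^ (2^Suc k)" by (simp add: power_mult[symmetric] mult.commute)
  finally show ?case .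
qed

lemma frob_inj:
  assumes "(1::'a::field) + 1 = 0" and "(x::'a) ^ (2^k) = y ^ (2^k)"
  shows "x = y"
proof -
  have "(x + y) ^ (2^k) = 0" using frob_add[OF assms(1)] assms(2)
  proof -
    have "y ^ (2^k) + y ^ (2^k) = (1 + 1) * y^(2^k)" by (simp add: algebra_simps)
    then show ?thesis using frob_add[OF assms(1), of x y k] assms by simp
  qed
  then have "x + y = 0" by simp
  moreover have "y + y = 0" using assms(1) by (metis distrib_right mult_1 mult_zero_left)
  ultimately show ?thesis by (metis add_right_cancel)
qed




lemma modeq_int: "(a::nat) mod m = b mod m \<longleftrightarrow> int m dvd int a - int b"
proof -
  have "a mod m = b mod m \<longleftrightarrow> int (a mod m) = int (b mod m)" by simp
  also have "\<dots> \<longleftrightarrow> int a mod int m = int b mod int m" by (simp add: of_nat_mod)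
  also have "\<dots> \<longleftrightarrow> int m dvd int a - int b" by (rule mod_eq_dvd_iff)
  finally show ?thesis .
qed

locale stsetup =
  fixes n :: nat and \<alpha> :: "'a::{field,finite}"
  assumes pn: "prime n" and cardU: "card (UNIV::'a set) = 2^n" and prim: "primitive_elem \<alpha>"
begin

abbreviation "NN \<equiv> (2::nat)^n - 1"

lemma n2: "n \<ge> 2" using pn prime_ge_2_nat by blast
lemma n1: "n \<ge> 1" using n2 by simp

lemma NN_ge: "NN \<ge> 3"
proof -
  have "(2::nat)^2 \<le> 2^n" using n2 by (intro power_increasing) auto
  then show ?thesis by simp
qed

lemma char2: "(1::'a) + 1 = 0" using char2_field[OF cardU n1] .

lemma add_self: "(x::'a) + x = 0"
proof -
  have "x + x = (1 + 1) * x" by (simp add: algebra_simps)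
  then show ?thesis using char2 by simp
qed

lemma alpha_nz: "\<alpha> \<noteq> 0"
proof
  assume a0: "\<alpha> = 0"
  have "\<forall>x::'a. x \<in> {0, 1}"
  proof
    fix x :: 'a
    show "x \<in> {0,1}"
    proof (cases "x = 0")
      case False
      then obtain i where "x = \<alpha>^i" using prim unfolding primitive_elem_def by blast
      then show ?thesis using a0 by (cases i) auto
    qed simp
  qed
  then have "UNIV \<subseteq> {0, 1::'a}" by blast
  then have "card (UNIV::'a set) \<le> card {0,1::'a}" by (intro card_mono) auto
  also have "\<dots> \<le> 2" by (rule card_insert_le_m1) auto
  finally show False using cardU NN_ge by simp
qed

lemma alpha_NN: "\<alpha> ^ NN = 1"
  using field_pow_card[OF alpha_nz] cardU by simp

lemma alpha_mod: "\<alpha> ^ i = \<alpha> ^ (i mod NN)"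
proof -
  have "\<alpha> ^ (NN * (i div NN) + i mod NN) = (\<alpha>^NN)^(i div NN) * \<alpha>^(i mod NN)"
    by (simp only: power_add power_mult)
  then show ?thesis using alpha_NN by (simp only: mult_div_mod_eq power_one mult_1)
qed

lemma alpha_pow_nz: "\<alpha> ^ i \<noteq> 0" using alpha_nz by simp

lemma alpha_surj: "x \<noteq> 0 \<Longrightarrow> \<exists>i<NN. x = \<alpha>^i"
proof -
  assume "x \<noteq> 0"
  then obtain i where "x = \<alpha>^i" using prim unfolding primitive_elem_def by blast
  moreover have "i mod NN < NN" using NN_ge by simp
  ultimately show ?thesis using alpha_mod[of i] by blast
qed

lemma alpha_img: "(\<lambda>i. \<alpha>^i) ` {..<NN} = UNIV - {0}"
proof
  show "(\<lambda>i. \<alpha>^i) ` {..<NN} \<subseteq> UNIV - {0}" using alpha_nz by auto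
  show "UNIV - {0} \<subseteq> (\<lambda>i. \<alpha>^i) ` {..<NN}"
  proof
    fix x :: 'a assume "x \<in> UNIV - {0}"
    then obtain i where "i < NN" "x = \<alpha>^i" using alpha_surj by blast
    then show "x \<in> (\<lambda>i. \<alpha>^i) ` {..<NN}" by blast
  qed
qed

lemma alpha_inj: "inj_on (\<lambda>i. \<alpha>^i) {..<NN}"
proof (rule eq_card_imp_inj_on)
  show "finite {..<NN}" by simp
  have "card (UNIV - {0::'a}) = NN" using cardU by (simp add: card_Diff_singleton)
  then show "card ((\<lambda>i. \<alpha>^i) ` {..<NN}) = card {..<NN}" unfolding alpha_img by simp
qed

lemma alpha_eq: "\<alpha>^i = \<alpha>^j \<longleftrightarrow> i mod NN = j mod NN"
proof
  assume "\<alpha>^i = \<alpha>^j"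
  then have "\<alpha>^(i mod NN) = \<alpha>^(j mod NN)" using alpha_mod[of i] alpha_mod[of j] by argo
  moreover have "i mod NN \<in> {..<NN}" "j mod NN \<in> {..<NN}" using NN_ge by auto
  ultimately show "i mod NN = j mod NN" using alpha_inj unfolding inj_on_def by blast
next
  assume "i mod NN = j mod NN" then show "\<alpha>^i = \<alpha>^j" using alpha_mod[of i] alpha_mod[of j] by argo
qed

lemma exps_alt: "exps \<alpha> n X = {i. i < NN \<and> \<alpha>^i \<in> X}"
  unfolding exps_def using NN_ge by auto

lemma exps_img: "(\<lambda>i. \<alpha>^i) ` exps \<alpha> n X = X - {0}"
proof
  show "(\<lambda>i. \<alpha>^i) ` exps \<alpha> n X \<subseteq> X - {0}" unfolding exps_alt using alpha_nz by auto
  show "X - {0} \<subseteq> (\<lambda>i. \<alpha>^i) ` exps \<alpha> n X"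
  proof
    fix x assume "x \<in> X - {0}"
    then obtain i where "i < NN" "x = \<alpha>^i" using alpha_surj by blast
    then show "x \<in> (\<lambda>i. \<alpha>^i) ` exps \<alpha> n X" unfolding exps_alt using \<open>x \<in> X - {0}\<close> by auto
  qed
qed

lemma exps_sub: "exps \<alpha> n X \<subseteq> {..<NN}" unfolding exps_alt by auto

lemma exps_finite: "finite (exps \<alpha> n X)" using exps_sub finite_subset by blast

lemma card_exps: "card (exps \<alpha> n X) = card (X - {0})"
proof -
  have inj: "inj_on (\<lambda>i. \<alpha>^i) (exps \<alpha> n X)" using alpha_inj exps_sub inj_on_subset by blast
  show ?thesis using card_image[OF inj] exps_img by simp
qed

definition dd :: "nat \<Rightarrow> nat \<Rightarrow> nat" where
  "dd r s = nat ((int r - int s) mod (2 ^ n - 1))"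

lemma int_NN: "int NN = 2^n - 1"
  by (simp add: of_nat_diff)

lemma NN_pos_int: "0 < int NN" using NN_ge by linarith

lemma dd_int: "int (dd r s) = (int r - int s) mod int NN"
  unfolding dd_def int_NN[symmetric] using NN_pos_int by (simp del: of_nat_diff)

lemma dd_lt: "dd r s < NN"
proof -
  have "(int r - int s) mod int NN < int NN" using NN_pos_int by (rule pos_mod_bound)
  then have "int (dd r s) < int NN" by (simp only: dd_int)
  then show ?thesis by (simp only: of_nat_less_iff)
qed

lemma dd_cong: "int NN dvd int (dd r s) - (int r - int s)"
  unfolding dd_int by (simp add: mod_eq_dvd_iff[symmetric])

lemma dd_nz:
  assumes "r < NN" "s < NN" "r \<noteq> s" shows "dd r s mod NN \<noteq> 0"
proof
  assume "dd r s mod NN = 0"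
  then have "dd r s = 0" using dd_lt by simp
  then have "int NN dvd - (int r - int s)" using dd_cong[of r s] by simp
  then have "int NN dvd int r - int s" by (simp only: dvd_minus_iff)
  then have "r mod NN = s mod NN" using modeq_int by blast
  then show False using assms by simp
qed

end



locale stF = stsetup +
  fixes F :: "'a::{field,finite} set set"
  assumes F3: "\<forall>X\<in>F. f2_dim_subspace 3 X \<and> coset_complete \<alpha> n X"
    and Fdisj: "\<forall>X\<in>F. \<forall>Y\<in>F. X \<noteq> Y \<longrightarrow> disjoint_coset_complete \<alpha> n X Y"
    and Fcard: "42 * n * card F = 2^n - 2"
begin

definition PR :: "'a set \<Rightarrow> (nat \<times> nat) set" where
  "PR X = {(r,s). r \<in> exps \<alpha> n X \<and> s \<in> exps \<alpha> n X \<and> r \<noteq> s}"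

definition cf :: "nat \<times> nat \<Rightarrow> nat" where
  "cf p = coset_rep n (dd (fst p) (snd p))"

lemma cds_alt: "coset_diff_set \<alpha> n X = cf ` PR X"
proof (rule set_eqI)
  fix x
  show "x \<in> coset_diff_set \<alpha> n X \<longleftrightarrow> x \<in> cf ` PR X"
  proof
    assume "x \<in> coset_diff_set \<alpha> n X"
    then obtain r s where "r \<in> exps \<alpha> n X" "s \<in> exps \<alpha> n X" "r \<noteq> s" "x = coset_rep n (dd r s)"
      unfolding coset_diff_set_def dd_def by blast
    then show "x \<in> cf ` PR X" unfolding PR_def cf_def by (intro image_eqI[of _ _ "(r,s)"]) auto
  next
    assume "x \<in> cf ` PR X"
    then obtain r s where "r \<in> exps \<alpha> n X" "s \<in> exps \<alpha> n X" "r \<noteq> s" "x = coset_rep n (dd r s)"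
      unfolding PR_def cf_def by auto
    then show "x \<in> coset_diff_set \<alpha> n X" unfolding coset_diff_set_def dd_def by blast
  qed
qed

lemma exps7: assumes "X \<in> F" shows "card (exps \<alpha> n X) = 7"
proof -
  have "f2_dim_subspace 3 X" using F3 assms by blast
  then have "finite X" "card X = 8" "0 \<in> X" unfolding f2_dim_subspace_def f2_subspace_def by auto
  then have "card (X - {0}) = 7" by (simp add: card_Diff_singleton)
  then show ?thesis using card_exps by simp
qed

lemma PR_sigma: "PR X = Sigma (exps \<alpha> n X) (\<lambda>r. exps \<alpha> n X - {r})"
  unfolding PR_def by auto

lemma card_PR: assumes "X \<in> F" shows "card (PR X) = 42"
proof -
  have "card (PR X) = (\<Sum>r\<in>exps \<alpha> n X. card (exps \<alpha> n X - {r}))"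
    unfolding PR_sigma using exps_finite by (simp add: card_SigmaI)
  also have "\<dots> = (\<Sum>r\<in>exps \<alpha> n X. 6)"
    by (rule sum.cong) (use exps7[OF assms] exps_finite in \<open>auto simp: card_Diff_singleton\<close>)
  also have "\<dots> = 42" using exps7[OF assms] by simp
  finally show ?thesis .
qed

lemma finite_PR: "finite (PR X)"
  unfolding PR_sigma using exps_finite by auto

lemma cds_card: assumes "X \<in> F" shows "card (coset_diff_set \<alpha> n X) = 42"
  using F3 assms unfolding coset_complete_def by blast

lemma cf_inj: assumes "X \<in> F" shows "inj_on cf (PR X)"
  using inj_on_iff_eq_card[OF finite_PR[of X], of cf] cds_card[OF assms] card_PR[OF assms] unfolding cds_alt by simp

lemma cds_elem:
  assumes "X \<in> F" and "c \<in> coset_diff_set \<alpha> n X"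
  shows "c mod NN \<noteq> 0 \<and> coset_rep n c = c"
proof -
  obtain r s where rs: "r \<in> exps \<alpha> n X" "s \<in> exps \<alpha> n X" "r \<noteq> s" and c: "c = coset_rep n (dd r s)"
    using assms(2) unfolding cds_alt PR_def cf_def by auto
  have "r < NN" "s < NN" using rs exps_sub by auto
  then have nz: "dd r s mod NN \<noteq> 0" using dd_nz rs(3) by blast
  have "c \<in> cyc_coset n (dd r s)" unfolding c by (rule coset_rep_in)
  then have "c \<noteq> 0 \<and> c < NN" using cyc_coset_range[OF n1 nz] by blast
  moreover have "coset_rep n c = c" unfolding c by (rule coset_rep_rep[OF n1])
  ultimately show ?thesis by simp
qed

lemma cover:
  assumes "0 < d" "d < NN"
  shows "\<exists>X\<in>F. \<exists>r s k. r \<in> exps \<alpha> n X \<and> s \<in> exps \<alpha> n X \<and> r \<noteq> s \<and> k < n \<and> d = (dd r s * 2^k) mod NN"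
proof -
  have finF: "finite F" by (rule finite_subset[OF subset_UNIV]) simp
  define R where "R = (\<Union>X\<in>F. coset_diff_set \<alpha> n X)"
  have fincds: "finite (coset_diff_set \<alpha> n X)" if "X \<in> F" for X
  proof (rule ccontr)
    assume "infinite (coset_diff_set \<alpha> n X)"
    then have "card (coset_diff_set \<alpha> n X) = 0" by simp
    then show False using cds_card[OF that] by simp
  qed
  have cardR: "card R = 42 * card F"
  proof -
    have "card R = (\<Sum>X\<in>F. card (coset_diff_set \<alpha> n X))"
      unfolding R_def
    proof (rule card_UN_disjoint[OF finF])
      show "\<forall>X\<in>F. finite (coset_diff_set \<alpha> n X)" using fincds by blast
      show "\<forall>X\<in>F. \<forall>Y\<in>F. X \<noteq> Y \<longrightarrow> coset_diff_set \<alpha> n X \<inter> coset_diff_set \<alpha> n Y = {}"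
        using Fdisj unfolding disjoint_coset_complete_def by blast
    qed
    also have "\<dots> = (\<Sum>X\<in>F. 42)" by (rule sum.cong[OF refl], rule cds_card)
    finally show ?thesis by simp
  qed
  have finR: "finite R" unfolding R_def using finF fincds by blast
  have Rel: "c mod NN \<noteq> 0 \<and> coset_rep n c = c" if "c \<in> R" for c
    using that cds_elem unfolding R_def by blast
  define U where "U = (\<Union>c\<in>R. cyc_coset n c)"
  have cardU': "card U = n * card R"
  proof -
    have "card U = (\<Sum>c\<in>R. card (cyc_coset n c))"
      unfolding U_def
    proof (rule card_UN_disjoint[OF finR])
      show "\<forall>c\<in>R. finite (cyc_coset n c)" using cyc_coset_finite by blast
      show "\<forall>c1\<in>R. \<forall>c2\<in>R. c1 \<noteq> c2 \<longrightarrow> cyc_coset n c1 \<inter> cyc_coset n c2 = {}"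
      proof (intro ballI impI)
        fix c1 c2 assume h: "c1 \<in> R" "c2 \<in> R" "c1 \<noteq> c2"
        show "cyc_coset n c1 \<inter> cyc_coset n c2 = {}"
        proof (rule ccontr)
          assume "cyc_coset n c1 \<inter> cyc_coset n c2 \<noteq> {}"
          then obtain x where x1: "x \<in> cyc_coset n c1" and x2: "x \<in> cyc_coset n c2" by blast
          obtain i1 where i1: "x = (c1 * 2^i1) mod NN" using x1 in_cyc_coset[OF n1] by blast
          obtain i2 where i2: "x = (c2 * 2^i2) mod NN" using x2 in_cyc_coset[OF n1] by blast
          have "cyc_coset n c1 = cyc_coset n c2"
            by (rule cyc_coset_meet[OF n1, of c1 i1 c2 i2]) (use i1 i2 in simp)
          then have "coset_rep n c1 = coset_rep n c2" unfolding coset_rep_def by simp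
          then show False using Rel[OF h(1)] Rel[OF h(2)] h(3) by simp
        qed
      qed
    qed
    also have "\<dots> = (\<Sum>c\<in>R. n)" by (rule sum.cong[OF refl], rule cyc_coset_card[OF pn]) (use Rel in blast)
    finally show ?thesis by simp
  qed
  have Usub: "U \<subseteq> {1..<NN}"
  proof
    fix x assume "x \<in> U"
    then obtain c where "c \<in> R" "x \<in> cyc_coset n c" unfolding U_def by blast
    then have "x \<noteq> 0 \<and> x < NN" using cyc_coset_range[OF n1] Rel by blast
    then show "x \<in> {1..<NN}" by simp
  qed
  have "card U = card {1..<NN}"
  proof -
    have "card U = 42 * n * card F" using cardU' cardR by simp
    also have "\<dots> = 2^n - 2" by (rule Fcard)
    also have "\<dots> = card {1..<NN}" by simp
    finally show ?thesis .
  qed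
  then have "U = {1..<NN}" using card_subset_eq[OF _ Usub] by simp
  then have "d \<in> U" using assms by simp
  then obtain c where c: "c \<in> R" "d \<in> cyc_coset n c" unfolding U_def by blast
  then obtain X where X: "X \<in> F" "c \<in> coset_diff_set \<alpha> n X" unfolding R_def by blast
  then obtain r s where rs: "r \<in> exps \<alpha> n X" "s \<in> exps \<alpha> n X" "r \<noteq> s" and cc: "c = coset_rep n (dd r s)"
    unfolding cds_alt PR_def cf_def by auto
  have "d \<in> cyc_coset n (dd r s)" using c(2) unfolding cc coset_rep_coset[OF n1] .
  then obtain k where "k \<le> n - 1" "d = (dd r s * 2^k) mod NN" unfolding cyc_coset_def by blast
  moreover have "k < n" using \<open>k \<le> n - 1\<close> n1 by linarith
  ultimately show ?thesis using X(1) rs by blast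
qed

end



context stF begin

definition blk :: "'a set \<Rightarrow> nat \<Rightarrow> nat \<Rightarrow> 'a set" where
  "blk X j k = (\<lambda>x. \<alpha>^j * x^(2^k)) ` X"

lemma blk_sub:
  assumes "X \<in> F" shows "f2_dim_subspace 3 (blk X j k)"
proof -
  have X: "f2_dim_subspace 3 X" using F3 assms by blast
  then have X0: "0 \<in> X" and Xc: "\<And>x y. x \<in> X \<Longrightarrow> y \<in> X \<Longrightarrow> x + y \<in> X" and Xf: "finite X" and Xcard: "card X = 8"
    unfolding f2_dim_subspace_def f2_subspace_def by auto
  have "0 \<in> blk X j k" unfolding blk_def using X0 by (intro image_eqI[of _ _ 0]) auto
  moreover have "x + y \<in> blk X j k" if hx: "x \<in> blk X j k" and hy: "y \<in> blk X j k" for x y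
  proof -
    obtain x' where "x' \<in> X" and ex: "x = \<alpha>^j * x'^(2^k)"
      using hx unfolding blk_def by blast
    obtain y' where "y' \<in> X" and ey: "y = \<alpha>^j * y'^(2^k)"
      using hy unfolding blk_def by blast
    have "x + y = \<alpha>^j * (x' + y')^(2^k)" unfolding ex ey by (simp add: frob_add[OF char2] distrib_left)
    then show ?thesis unfolding blk_def using Xc \<open>x' \<in> X\<close> \<open>y' \<in> X\<close> by blast
  qed
  moreover have "inj_on (\<lambda>x. \<alpha>^j * x^(2^k)) X"
  proof (rule inj_onI)
    fix x y assume "\<alpha>^j * x^(2^k) = \<alpha>^j * y^(2^k)"
    then have "x^(2^k) = y^(2^k)" using alpha_nz by simp
    then show "x = y" by (rule frob_inj[OF char2])
  qed
  then have "card (blk X j k) = 8" unfolding blk_def using Xcard by (simp add: card_image)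
  ultimately show ?thesis unfolding f2_dim_subspace_def f2_subspace_def blk_def using Xf by auto
qed

lemma blk_mem:
  assumes "X \<in> F"
  shows "\<alpha>^m \<in> blk X j k \<longleftrightarrow> (\<exists>e\<in>exps \<alpha> n X. m mod NN = (j + e*2^k) mod NN)"
proof
  assume "\<alpha>^m \<in> blk X j k"
  then obtain x where x: "x \<in> X" "\<alpha>^m = \<alpha>^j * x^(2^k)" unfolding blk_def by blast
  have "x \<noteq> 0" using x(2) alpha_pow_nz[of m] by auto
  then obtain e where e: "e < NN" "x = \<alpha>^e" using alpha_surj by blast
  then have "e \<in> exps \<alpha> n X" unfolding exps_alt using x(1) by simp
  moreover have "\<alpha>^m = \<alpha>^(j + e*2^k)" using x(2) e(2) by (simp add: power_add power_mult)
  ultimately show "\<exists>e\<in>exps \<alpha> n X. m mod NN = (j + e*2^k) mod NN" using alpha_eq by blast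
next
  assume "\<exists>e\<in>exps \<alpha> n X. m mod NN = (j + e*2^k) mod NN"
  then obtain e where e: "e \<in> exps \<alpha> n X" "m mod NN = (j + e*2^k) mod NN" by blast
  then have "\<alpha>^m = \<alpha>^(j + e*2^k)" using alpha_eq by blast
  also have "\<dots> = \<alpha>^j * (\<alpha>^e)^(2^k)" by (simp add: power_add power_mult)
  finally show "\<alpha>^m \<in> blk X j k" unfolding blk_def using e(1) unfolding exps_alt by blast
qed

lemma mod_to_dvd: "(a::nat) mod NN = b mod NN \<Longrightarrow> int NN dvd int a - int b"
  using modeq_int by blast

lemma dvd_to_mod: "int NN dvd int a - int b \<Longrightarrow> (a::nat) mod NN = b mod NN"
  using modeq_int by blast

lemma exist:
  assumes "a \<noteq> 0" "b \<noteq> 0" "a \<noteq> b"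
  shows "\<exists>X\<in>F. \<exists>j k. k < n \<and> a \<in> blk X j k \<and> b \<in> blk X j k"
proof -
  obtain u where u: "u < NN" "a = \<alpha>^u" using alpha_surj assms(1) by blast
  obtain v where v: "v < NN" "b = \<alpha>^v" using alpha_surj assms(2) by blast
  have uv: "u \<noteq> v" using u v assms(3) by blast
  define d where "d = dd v u"
  have "d mod NN \<noteq> 0" unfolding d_def using dd_nz u(1) v(1) uv by metis
  then have d0: "0 < d" by (cases d) auto
  have dl: "d < NN" unfolding d_def by (rule dd_lt)
  obtain X r s k where X: "X \<in> F" "r \<in> exps \<alpha> n X" "s \<in> exps \<alpha> n X" "r \<noteq> s" "k < n"
    and dk: "d = (dd r s * 2^k) mod NN"
    using cover[OF d0 dl] by blast
  obtain M where M: "M = NN" by blast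
  have M1: "1 \<le> M" using M NN_ge by simp
  define j where "j = u + (M - 1) * (s * 2^k)"
  have ja: "j + s * 2^k = u + M * (s * 2^k)"
  proof -
    obtain m where "M = Suc m" using M1 by (cases M) auto
    then show ?thesis unfolding j_def by simp
  qed
  have "u mod NN = (j + s * 2^k) mod NN" unfolding ja M by simp
  then have ain: "a \<in> blk X j k" unfolding u(2) using blk_mem[OF X(1)] X(3) by blast
  have A1: "int NN dvd int d - (int v - int u)" unfolding d_def by (rule dd_cong)
  have A2: "int NN dvd int d - int (dd r s * 2^k)"
    by (rule mod_to_dvd) (use dk in simp)
  have A3: "int NN dvd (int (dd r s) - (int r - int s)) * 2^k"
    using dd_cong[of r s] by (rule dvd_mult2)
  have A4: "int NN dvd int NN * (int s * 2^k)" by simp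
  have dv: "int NN dvd (int d - int (dd r s * 2^k)) - (int d - (int v - int u))
        + (int (dd r s) - (int r - int s)) * 2^k - int NN * (int s * 2^k)"
    by (rule dvd_diff[OF dvd_add[OF dvd_diff[OF A2 A1] A3] A4])
  have eqv: "(int d - int (dd r s * 2^k)) - (int d - (int v - int u))
        + (int (dd r s) - (int r - int s)) * 2^k - int NN * (int s * 2^k) = int v - int (j + r * 2^k)"
  proof -
    have "int j = int u + (int M - 1) * (int s * 2^k)" unfolding j_def using M1 by (simp add: of_nat_diff)
    then show ?thesis unfolding M[symmetric] by (simp add: algebra_simps)
  qed
  have "int NN dvd int v - int (j + r * 2^k)" using dv unfolding eqv .
  then have "v mod NN = (j + r * 2^k) mod NN" by (rule dvd_to_mod)
  then have bin: "b \<in> blk X j k" unfolding v(2) using blk_mem[OF X(1)] X(2) by blast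
  show ?thesis using X(1,5) ain bin by blast
qed

end



context stF begin

lemma blk_exp:
  assumes "X \<in> F" "x \<in> blk X j k" "x \<noteq> 0"
  obtains u e where "u < NN" "x = \<alpha>^u" "e \<in> exps \<alpha> n X" "int NN dvd int u - (int j + int e * 2^k)"
proof -
  obtain u where u: "u < NN" "x = \<alpha>^u" using alpha_surj assms(3) by blast
  then obtain e where e: "e \<in> exps \<alpha> n X" "u mod NN = (j + e*2^k) mod NN"
    using blk_mem[OF assms(1)] assms(2) by blast
  have "int NN dvd int u - int (j + e*2^k)" using e(2) by (rule mod_to_dvd)
  then have "int NN dvd int u - (int j + int e * 2^k)" by simp
  then show ?thesis using that u e(1) by blast
qed

lemma uniq:
  assumes X1: "X1 \<in> F" and X2: "X2 \<in> F" and k1: "k1 < n" and k2: "k2 < n"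
    and ab: "a \<noteq> 0" "b \<noteq> 0" "a \<noteq> b"
    and in1: "a \<in> blk X1 j1 k1" "b \<in> blk X1 j1 k1"
    and in2: "a \<in> blk X2 j2 k2" "b \<in> blk X2 j2 k2"
  shows "blk X1 j1 k1 = blk X2 j2 k2"
proof -
  obtain u e1 where u: "u < NN" "a = \<alpha>^u" "e1 \<in> exps \<alpha> n X1" and h1: "int NN dvd int u - (int j1 + int e1 * 2^k1)"
    using blk_exp[OF X1 in1(1) ab(1)] by blast
  obtain v f1 where v: "v < NN" "b = \<alpha>^v" "f1 \<in> exps \<alpha> n X1" and h2: "int NN dvd int v - (int j1 + int f1 * 2^k1)"
    using blk_exp[OF X1 in1(2) ab(2)] by blast
  obtain u' e2 where u': "u' < NN" "a = \<alpha>^u'" "e2 \<in> exps \<alpha> n X2" and h3': "int NN dvd int u' - (int j2 + int e2 * 2^k2)"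
    using blk_exp[OF X2 in2(1) ab(1)] by blast
  obtain v' f2 where v': "v' < NN" "b = \<alpha>^v'" "f2 \<in> exps \<alpha> n X2" and h4': "int NN dvd int v' - (int j2 + int f2 * 2^k2)"
    using blk_exp[OF X2 in2(2) ab(2)] by blast
  have "u' = u" using u u' alpha_inj unfolding inj_on_def by auto
  then have h3: "int NN dvd int u - (int j2 + int e2 * 2^k2)" using h3' by simp
  have "v' = v" using v v' alpha_inj unfolding inj_on_def by auto
  then have h4: "int NN dvd int v - (int j2 + int f2 * 2^k2)" using h4' by simp
  have uv: "u \<noteq> v" using u v ab(3) by blast
  have ef: "e1 \<noteq> f1" "e2 \<noteq> f2"
  proof -
    show "e1 \<noteq> f1"
    proof
      assume "e1 = f1"
      have "int NN dvd (int u - (int j1 + int e1 * 2^k1)) - (int v - (int j1 + int f1 * 2^k1))"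
        by (rule dvd_diff[OF h1 h2])
      moreover have "(int u - (int j1 + int e1 * 2^k1)) - (int v - (int j1 + int f1 * 2^k1)) = int u - int v"
        using \<open>e1 = f1\<close> by simp
      ultimately have "u mod NN = v mod NN" using dvd_to_mod by metis
      then show False using u(1) v(1) uv by simp
    qed
    show "e2 \<noteq> f2"
    proof
      assume "e2 = f2"
      have "int NN dvd (int u - (int j2 + int e2 * 2^k2)) - (int v - (int j2 + int f2 * 2^k2))"
        by (rule dvd_diff[OF h3 h4])
      moreover have "(int u - (int j2 + int e2 * 2^k2)) - (int v - (int j2 + int f2 * 2^k2)) = int u - int v"
        using \<open>e2 = f2\<close> by simp
      ultimately have "u mod NN = v mod NN" using dvd_to_mod by metis
      then show False using u(1) v(1) uv by simp
    qed
  qed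
  define D1 where "D1 = dd f1 e1"
  define D2 where "D2 = dd f2 e2"
  have c1: "int NN dvd (int D1 - (int f1 - int e1)) * 2^k1" unfolding D1_def by (rule dvd_mult2[OF dd_cong])
  have c2: "int NN dvd (int D2 - (int f2 - int e2)) * 2^k2" unfolding D2_def by (rule dvd_mult2[OF dd_cong])
  have dv: "int NN dvd (((int v - (int j1 + int f1 * 2^k1)) - (int u - (int j1 + int e1 * 2^k1))) - (int D1 - (int f1 - int e1)) * 2^k1)
     - (((int v - (int j2 + int f2 * 2^k2)) - (int u - (int j2 + int e2 * 2^k2))) - (int D2 - (int f2 - int e2)) * 2^k2)"
    by (rule dvd_diff[OF dvd_diff[OF dvd_diff[OF h2 h1] c1] dvd_diff[OF dvd_diff[OF h4 h3] c2]])
  have eqv: "(((int v - (int j1 + int f1 * 2^k1)) - (int u - (int j1 + int e1 * 2^k1))) - (int D1 - (int f1 - int e1)) * 2^k1)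
     - (((int v - (int j2 + int f2 * 2^k2)) - (int u - (int j2 + int e2 * 2^k2))) - (int D2 - (int f2 - int e2)) * 2^k2)
     = int (D2 * 2^k2) - int (D1 * 2^k1)"
    by (simp add: algebra_simps)
  have "(D2 * 2^k2) mod NN = (D1 * 2^k1) mod NN"
    using dv unfolding eqv by (rule dvd_to_mod)
  then have "(D1 * 2^k1) mod NN = (D2 * 2^k2) mod NN" by simp
  then have "cyc_coset n D1 = cyc_coset n D2" by (rule cyc_coset_meet[OF n1])
  then have cfeq: "cf (f1, e1) = cf (f2, e2)" unfolding cf_def coset_rep_def D1_def D2_def by simp
  have p1: "(f1, e1) \<in> PR X1" unfolding PR_def using u(3) v(3) ef(1) by auto
  have p2: "(f2, e2) \<in> PR X2" unfolding PR_def using u'(3) v'(3) ef(2) by auto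
  have XX: "X1 = X2"
  proof (rule ccontr)
    assume "X1 \<noteq> X2"
    then have "coset_diff_set \<alpha> n X1 \<inter> coset_diff_set \<alpha> n X2 = {}"
      using Fdisj X1 X2 unfolding disjoint_coset_complete_def by blast
    moreover have "cf (f1, e1) \<in> coset_diff_set \<alpha> n X1" unfolding cds_alt using p1 by blast
    moreover have "cf (f1, e1) \<in> coset_diff_set \<alpha> n X2" unfolding cds_alt cfeq using p2 by blast
    ultimately show False by blast
  qed
  then have "(f1, e1) = (f2, e2)" using cf_inj[OF X1] p1 p2 cfeq unfolding inj_on_def by blast
  then have fe: "f1 = f2" "e1 = e2" by auto
  have "(D1 * 2^k1) mod NN = (D1 * 2^k2) mod NN"
    using \<open>(D1 * 2^k1) mod NN = (D2 * 2^k2) mod NN\<close> unfolding D1_def D2_def fe .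
  moreover have "D1 mod NN \<noteq> 0" unfolding D1_def using dd_nz u(3) v(3) exps_sub ef(1) fe
    by (metis lessThan_iff subsetD)
  ultimately have kk: "k1 = k2" using coset_inj[OF pn _ k1 k2] by blast
  have "int NN dvd (int u - (int j2 + int e2 * 2^k2)) - (int u - (int j1 + int e1 * 2^k1))"
    by (rule dvd_diff[OF h3 h1])
  moreover have "(int u - (int j2 + int e2 * 2^k2)) - (int u - (int j1 + int e1 * 2^k1)) = int j1 - int j2"
    using fe kk by simp
  ultimately have "j1 mod NN = j2 mod NN" using dvd_to_mod by metis
  then have "\<alpha>^j1 = \<alpha>^j2" using alpha_eq by blast
  then show ?thesis unfolding blk_def XX kk by simp
qed

end



context stF begin

lemma steiner: "steiner_structure 2 3 {blk X j k | X j k. X \<in> F \<and> k < n}"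
  (is "steiner_structure 2 3 ?S")
  unfolding steiner_structure_def
proof (intro conjI allI impI)
  show "\<forall>B\<in>?S. f2_dim_subspace 3 B" using blk_sub by blast
next
  fix T :: "'a set" assume T: "f2_dim_subspace 2 T"
  then have T0: "0 \<in> T" and Tc: "\<And>x y. x \<in> T \<Longrightarrow> y \<in> T \<Longrightarrow> x + y \<in> T" and Tf: "finite T" and Tcard: "card T = 4"
    unfolding f2_dim_subspace_def f2_subspace_def by auto
  have c3: "card (T - {0}) = 3" using Tcard T0 Tf by (simp add: card_Diff_singleton)
  then obtain a where a: "a \<in> T - {0}" by (metis card.empty empty_iff ex_in_conv zero_neq_numeral)
  have "card (T - {0} - {a}) = 2" using c3 a Tf by (simp add: card_Diff_singleton)
  then obtain b where b: "b \<in> T - {0} - {a}" by (metis card.empty empty_iff ex_in_conv zero_neq_numeral)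
  have a0: "a \<noteq> 0" "a \<in> T" using a by auto
  have b0: "b \<noteq> 0" "b \<in> T" "b \<noteq> a" using b by auto
  have abz: "a + b \<noteq> 0"
  proof
    assume "a + b = 0"
    then have "a = a + (b + b)" using add_self[of b] by simp
    also have "\<dots> = (a + b) + b" by (simp add: add.assoc)
    finally show False using \<open>a + b = 0\<close> b0(3) by simp
  qed
  have aba: "a + b \<noteq> a" using b0(1) by simp
  have abb: "a + b \<noteq> b" using a0(1) by simp
  have Teq: "{0, a, b, a + b} = T"
  proof (rule card_subset_eq[OF Tf])
    show "{0, a, b, a + b} \<subseteq> T" using T0 a0 b0 Tc by auto
    show "card {0, a, b, a + b} = card T" using Tcard a0(1) b0(1,3) abz aba abb by auto
  qed
  have sub: "T \<subseteq> B" if "B \<in> ?S" "a \<in> B" "b \<in> B" for B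
  proof -
    have "f2_dim_subspace 3 B" using that(1) blk_sub by blast
    then have "0 \<in> B" "a + b \<in> B" using that(2,3) unfolding f2_dim_subspace_def f2_subspace_def by auto
    then show ?thesis unfolding Teq[symmetric] using that(2,3) by auto
  qed
  obtain X j k where X: "X \<in> F" "k < n" "a \<in> blk X j k" "b \<in> blk X j k"
    using exist[OF a0(1) b0(1) b0(3)[symmetric]] by blast
  have inS: "blk X j k \<in> ?S" using X by blast
  show "\<exists>!B. B \<in> ?S \<and> T \<subseteq> B"
  proof (rule ex1I[of _ "blk X j k"])
    show "blk X j k \<in> ?S \<and> T \<subseteq> blk X j k" using inS sub X by blast
  next
    fix B assume B: "B \<in> ?S \<and> T \<subseteq> B"
    then obtain X' j' k' where X': "X' \<in> F" "k' < n" "B = blk X' j' k'" by blast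
    have "a \<in> B" "b \<in> B" using B a0 b0 by auto
    then show "B = blk X j k"
      using uniq[OF X'(1) X(1) X'(2) X(2) a0(1) b0(1) b0(3)[symmetric]] X X'(3) by blast
  qed
qed

end

theorem theorem2:
  fixes n :: nat and \<alpha> :: "'a::{field,finite}"
  assumes "prime n" and "n mod 6 = 1"
    and "card (UNIV :: 'a set) = 2 ^ n"
    and "primitive_elem \<alpha>"
    and "\<exists>F. (\<forall>X\<in>F. f2_dim_subspace 3 X \<and> coset_complete \<alpha> n X)
             \<and> (\<forall>X\<in>F. \<forall>Y\<in>F. X \<noteq> Y \<longrightarrow> disjoint_coset_complete \<alpha> n X Y)
             \<and> 42 * n * card F = 2 ^ n - 2"
  shows "\<exists>S. steiner_structure 2 3 (S :: 'a set set)"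
proof -
  obtain F where F: "\<forall>X\<in>F. f2_dim_subspace 3 X \<and> coset_complete \<alpha> n X"
    "\<forall>X\<in>F. \<forall>Y\<in>F. X \<noteq> Y \<longrightarrow> disjoint_coset_complete \<alpha> n X Y"
    "42 * n * card F = 2 ^ n - 2" using assms(5) by blast
  interpret stF n \<alpha> F
    by unfold_locales (use assms F in auto)
  show ?thesis using steiner by blast
qed



end
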